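(* Let $P_F$ denote the joint distribution, in a population of healthcare-seeking individuals, of the random variables $(A, Y, W, D, S, \Delta, X)$, where $A\in\{0,1\}$ is a binary exposure (vaccination status or dichotomized immune marker level at the time of potential SARS-CoV-2 exposure), $Y\in\{0,1\}$ indicates SARS-CoV-2 infection, $W\in\{0,1\}$ indicates a cause other than SARS-CoV-2 that could induce symptoms, $D\in\{0,1\}$ indicates meeting the symptom definition, $S\in\{0,1\}$ indicates obtaining SARS-CoV-2 testing (and hence enrollment in the test-negative design (TND) study when $D=1$), $\Delta\in\{0,1\}$ indicates that the exposure is observed, and $X\in\mathbb{R}^r$ are covariates. Let $P$ denote the distribution of the data as recorded in the TND study (exposure status recorded at testing and SARS-CoV-2 test result), and define $$\mu_P(y,x) := P(A=1\mid D=1,S=1,\Delta=1,Y=y,X=x),\qquad OR(P)(x):=\frac{\mu_P(1,x)/(1-\mu_P(1,x))}{\mu_P(0,x)/(1-\mu_P(0,x))}.$$ Assume: (1) $P\big(P(Y=1,D=1\mid S=1,X)>0\big)=1$ and $P\big(P(Y=0,D=1\mid S=1,X)>0\big)=1$; (2) $P\big(P(\Delta=1\mid D=1,S=1,Y,X)>0\big)=1$; (3) $P_F\big(P_F(S=1\mid D=1,Y,X)>0\big)=1$; (4) $S\perp\!\!\!\perp A\mid D=1,Y,X$; (5) $\Delta\perp\!\!\!\perp A\mid D=1,S=1,Y,X$; (6) (noncase exchangeability) $P_F(Y=0,D=1\mid A=1,X)=P_F(Y=0,D=1\mid A=0,X)$; (7) the exposure status recorded at SARS-CoV-2 testing accurately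 reflects the exposure status $A$ at the time of potential SARS-CoV-2 exposure in TND participants; (8) the SARS-CoV-2 test result accurately measures the infection status $Y$ in TND participants. Then $$OR(P)(x)=RR(P_F)(x):=\frac{P_F(Y=1,D=1\mid A=1,X=x)}{P_F(Y=1,D=1\mid A=0,X=x)}.$$
   Context: Test-negative design: individuals are enrolled if they meet the symptom definition ($D=1$) and obtain SARS-CoV-2 testing ($S=1$); cases test positive ($Y=1$) and noncases test negative ($Y=0$). The exposure $A$ is observed only for participants with $\Delta=1$ (missing either unintentionally or by a two-phase sampling design). $P_F$ is the full-data distribution over the healthcare-seeking population; $P$ is the distribution of the observed TND data. *)

theory Defs
  imports "HOL-Probability.Probability"
begin

text \<open>Outcome of one individual, apart from the covariates X.
  vA: exposure A; vY: SARS-CoV-2 infection Y; vW: other symptom cause W;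
  vD: meets symptom definition D; vS: obtains testing S; vDelta: exposure observed;
  vArec: exposure status as recorded at testing; vYrec: SARS-CoV-2 test result.\<close>
record indiv =
  vA :: bool
  vY :: bool
  vW :: bool
  vD :: bool
  vS :: bool
  vDelta :: bool
  vArec :: bool
  vYrec :: bool

definition pr :: "indiv pmf \<Rightarrow> (indiv \<Rightarrow> bool) \<Rightarrow> real" where
  "pr q E = measure_pmf.prob q {\<omega>. E \<omega>}"

definition cpr :: "indiv pmf \<Rightarrow> (indiv \<Rightarrow> bool) \<Rightarrow> (indiv \<Rightarrow> bool) \<Rightarrow> real" where
  "cpr q E C = pr q (\<lambda>\<omega>. E \<omega> \<and> C \<omega>) / pr q C"

text \<open>mu_P(y,x) = P(A=1 | D=1,S=1,Delta=1,Y=y,X=x), with A and Y the recorded values,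
  where q is the conditional law of the individual given X = x.\<close>
definition muP :: "indiv pmf \<Rightarrow> bool \<Rightarrow> real" where
  "muP q y = cpr q vArec (\<lambda>\<omega>. vD \<omega> \<and> vS \<omega> \<and> vDelta \<omega> \<and> vYrec \<omega> = y)"

definition ORP :: "indiv pmf \<Rightarrow> real" where
  "ORP q = (muP q True / (1 - muP q True)) / (muP q False / (1 - muP q False))"

definition RRF :: "indiv pmf \<Rightarrow> real" where
  "RRF q = cpr q (\<lambda>\<omega>. vY \<omega> \<and> vD \<omega>) vA / cpr q (\<lambda>\<omega>. vY \<omega> \<and> vD \<omega>) (\<lambda>\<omega>. \<not> vA \<omega>)"

end

theory Submission
  imports Defs
begin

lemma pr_cong:
  assumes "\<And>\<omega>. \<omega> \<in> set_pmf q \<Longrightarrow> E \<omega> = F \<omega>"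
  shows "pr q E = pr q F"
proof -
  have "{\<omega>. E \<omega>} \<inter> set_pmf q = {\<omega>. F \<omega>} \<inter> set_pmf q" using assms by auto
  then show ?thesis unfolding pr_def by (metis measure_Int_set_pmf)
qed

lemma pr_split: "pr q E = pr q (\<lambda>\<omega>. B \<omega> \<and> E \<omega>) + pr q (\<lambda>\<omega>. \<not> B \<omega> \<and> E \<omega>)"
proof -
  have "{\<omega>. E \<omega>} = {\<omega>. B \<omega> \<and> E \<omega>} \<union> {\<omega>. \<not> B \<omega> \<and> E \<omega>}" by auto
  moreover have "{\<omega>. B \<omega> \<and> E \<omega>} \<inter> {\<omega>. \<not> B \<omega> \<and> E \<omega>} = {}" by auto
  ultimately show ?thesis unfolding pr_def
    using measure_pmf.finite_measure_Union[where A="{\<omega>. B \<omega> \<and> E \<omega>}" and B="{\<omega>. \<not> B \<omega> \<and> E \<omega>}"] by simp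
qed

lemma pr_nonneg: "pr q E \<ge> 0" unfolding pr_def by simp

lemma pr_mono: assumes "\<And>\<omega>. E \<omega> \<Longrightarrow> F \<omega>" shows "pr q E \<le> pr q F"
  unfolding pr_def using assms by (intro measure_pmf.finite_measure_mono) auto

lemma alg:
  fixes p11 p01 p10 p00 A1 A0 :: real
  assumes "p11 \<ge> 0" "p01 \<ge> 0" "p10 \<ge> 0" "p00 \<ge> 0"
    "p11 \<le> A1" "p10 \<le> A1" "p01 \<le> A0" "p00 \<le> A0"
    "p10 + p00 > 0" "p11 + p01 > 0" "p10 / A1 = p00 / A0"
  shows "((p11/(p11+p01)) / (1 - p11/(p11+p01))) / ((p10/(p10+p00)) / (1 - p10/(p10+p00)))
        = (p11/A1) / (p01/A0)"
proof -
  have e1: "1 - p11/(p11+p01) = p01/(p11+p01)" using assms by (simp add: field_simps)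
  have e0: "1 - p10/(p10+p00) = p00/(p10+p00)" using assms by (simp add: field_simps)
  show ?thesis
  proof (cases "A1 = 0 \<or> A0 = 0")
    case True then show ?thesis using assms e1 e0 by auto
  next
    case False
    then have "A1 > 0" "A0 > 0" using assms by auto
    have eq: "A0 * p10 = A1 * p00" using assms \<open>A1 > 0\<close> \<open>A0 > 0\<close> by (simp add: field_simps)
    have "p10 \<noteq> 0" proof assume "p10 = 0" then have "p00 = 0" using eq \<open>A1 > 0\<close> by simp
      then show False using assms \<open>p10 = 0\<close> by simp qed
    moreover have "p00 \<noteq> 0" proof assume "p00 = 0" then have "p10 = 0" using eq \<open>A0 > 0\<close> by simp
      then show False using assms \<open>p00 = 0\<close> by simp qed
    ultimately have "p10 > 0" "p00 > 0" using assms by auto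
    have o0': "(p10/(p10+p00)) / (1 - p10/(p10+p00)) = p10 / p00"
      unfolding e0 using \<open>p10 > 0\<close> \<open>p00 > 0\<close> by simp
    have o0: "(p10/(p10+p00)) / (1 - p10/(p10+p00)) = A1 / A0"
      unfolding o0' using \<open>p10 > 0\<close> \<open>p00 > 0\<close> eq \<open>A1 > 0\<close> \<open>A0 > 0\<close> by (simp add: field_simps)
    have o1: "(p11/(p11+p01)) / (1 - p11/(p11+p01)) = p11 / p01"
      unfolding e1 using assms by simp
    show ?thesis unfolding o0 o1 using \<open>A1 > 0\<close> \<open>A0 > 0\<close>
      by (cases "p01 = 0") (auto simp: field_simps)
  qed
qed

lemma main:
  fixes q :: "indiv pmf"
  assumes DS: "pr q (\<lambda>\<omega>. vD \<omega> \<and> vS \<omega>) > 0"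
  assumes pos1: "pr q (\<lambda>\<omega>. vD \<omega> \<and> vS \<omega>) > 0 \<longrightarrow>
      cpr q (\<lambda>\<omega>. vYrec \<omega> \<and> vD \<omega>) vS > 0 \<and>
      cpr q (\<lambda>\<omega>. \<not> vYrec \<omega> \<and> vD \<omega>) vS > 0"
  assumes pos2: "pr q (\<lambda>\<omega>. vD \<omega> \<and> vS \<omega>) > 0 \<longrightarrow>
      (\<forall>y. pr q (\<lambda>\<omega>. vD \<omega> \<and> vS \<omega> \<and> vYrec \<omega> = y) > 0 \<longrightarrow>
         cpr q vDelta (\<lambda>\<omega>. vD \<omega> \<and> vS \<omega> \<and> vYrec \<omega> = y) > 0)"
  assumes ciS: "\<forall>y a s.
      pr q (\<lambda>\<omega>. vS \<omega> = s \<and> vA \<omega> = a \<and> vD \<omega> \<and> vY \<omega> = y) * pr q (\<lambda>\<omega>. vD \<omega> \<and> vY \<omega> = y)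
    = pr q (\<lambda>\<omega>. vS \<omega> = s \<and> vD \<omega> \<and> vY \<omega> = y) * pr q (\<lambda>\<omega>. vA \<omega> = a \<and> vD \<omega> \<and> vY \<omega> = y)"
  assumes ciDelta: "\<forall>y a d.
      pr q (\<lambda>\<omega>. vDelta \<omega> = d \<and> vA \<omega> = a \<and> vD \<omega> \<and> vS \<omega> \<and> vY \<omega> = y)
        * pr q (\<lambda>\<omega>. vD \<omega> \<and> vS \<omega> \<and> vY \<omega> = y)
    = pr q (\<lambda>\<omega>. vDelta \<omega> = d \<and> vD \<omega> \<and> vS \<omega> \<and> vY \<omega> = y)
        * pr q (\<lambda>\<omega>. vA \<omega> = a \<and> vD \<omega> \<and> vS \<omega> \<and> vY \<omega> = y)"
  assumes exch: "cpr q (\<lambda>\<omega>. \<not> vY \<omega> \<and> vD \<omega>) vA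
                          = cpr q (\<lambda>\<omega>. \<not> vY \<omega> \<and> vD \<omega>) (\<lambda>\<omega>. \<not> vA \<omega>)"
  assumes recA: "\<forall>\<omega>\<in>set_pmf q. vD \<omega> \<and> vS \<omega> \<and> vDelta \<omega> \<longrightarrow> vArec \<omega> = vA \<omega>"
  assumes recY: "\<forall>\<omega>\<in>set_pmf q. vD \<omega> \<and> vS \<omega> \<longrightarrow> vYrec \<omega> = vY \<omega>"
  shows "ORP q = RRF q"
proof -
  define p where "p a y = pr q (\<lambda>\<omega>. vA \<omega> = a \<and> vD \<omega> \<and> vY \<omega> = y)" for a y
  define P where "P y = pr q (\<lambda>\<omega>. vD \<omega> \<and> vY \<omega> = y)" for y
  define T where "T a y = pr q (\<lambda>\<omega>. vA \<omega> = a \<and> vD \<omega> \<and> vS \<omega> \<and> vY \<omega> = y)" for a y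
  define M where "M y = pr q (\<lambda>\<omega>. vD \<omega> \<and> vS \<omega> \<and> vY \<omega> = y)" for y
  define N where "N a y = pr q (\<lambda>\<omega>. vDelta \<omega> \<and> vA \<omega> = a \<and> vD \<omega> \<and> vS \<omega> \<and> vY \<omega> = y)" for a y
  define Dl where "Dl y = pr q (\<lambda>\<omega>. vDelta \<omega> \<and> vD \<omega> \<and> vS \<omega> \<and> vY \<omega> = y)" for y
  define A1 where "A1 = pr q vA"
  define A0 where "A0 = pr q (\<lambda>\<omega>. \<not> vA \<omega>)"
  have Psplit: "P y = p True y + p False y" for y
    unfolding P_def p_def by (subst pr_split[where B=vA]) (simp add: conj_ac)
  have Msplit: "M y = T True y + T False y" for y
    unfolding M_def T_def by (subst pr_split[where B=vA]) (simp add: conj_ac)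
  have ciS': "T a y * P y = M y * p a y" for a y
  proof -
    have "T a y = pr q (\<lambda>\<omega>. vS \<omega> = True \<and> vA \<omega> = a \<and> vD \<omega> \<and> vY \<omega> = y)"
      unfolding T_def by (rule pr_cong) auto
    moreover have "M y = pr q (\<lambda>\<omega>. vS \<omega> = True \<and> vD \<omega> \<and> vY \<omega> = y)"
      unfolding M_def by (rule pr_cong) auto
    ultimately show ?thesis using ciS[rule_format, where y=y and a=a and s=True] unfolding P_def p_def by simp
  qed
  have ciD': "N a y * M y = Dl y * T a y" for a y
  proof -
    have "N a y = pr q (\<lambda>\<omega>. vDelta \<omega> = True \<and> vA \<omega> = a \<and> vD \<omega> \<and> vS \<omega> \<and> vY \<omega> = y)"
      unfolding N_def by (rule pr_cong) auto
    moreover have "Dl y = pr q (\<lambda>\<omega>. vDelta \<omega> = True \<and> vD \<omega> \<and> vS \<omega> \<and> vY \<omega> = y)"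
      unfolding Dl_def by (rule pr_cong) auto
    ultimately show ?thesis using ciDelta[rule_format, where y=y and a=a and d=True] unfolding M_def T_def by simp
  qed
  have Mrec: "pr q (\<lambda>\<omega>. vD \<omega> \<and> vS \<omega> \<and> vYrec \<omega> = y) = M y" for y
    unfolding M_def using recY by (intro pr_cong) auto
  have Mpos: "M y > 0" for y
  proof -
    have S0: "pr q vS \<ge> 0" by (rule pr_nonneg)
    have "pr q vS \<noteq> 0" using pos1 DS unfolding cpr_def by auto
    then have S: "pr q vS > 0" using S0 by linarith
    have "pr q (\<lambda>\<omega>. (vYrec \<omega> = y \<and> vD \<omega>) \<and> vS \<omega>) > 0"
      using pos1 DS S unfolding cpr_def by (cases y) (auto simp: zero_less_divide_iff)
    moreover have "pr q (\<lambda>\<omega>. (vYrec \<omega> = y \<and> vD \<omega>) \<and> vS \<omega>) = M y"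
      unfolding Mrec[symmetric] by (rule pr_cong) auto
    ultimately show ?thesis by simp
  qed
  have Dlpos: "Dl y > 0" for y
  proof -
    have "cpr q vDelta (\<lambda>\<omega>. vD \<omega> \<and> vS \<omega> \<and> vYrec \<omega> = y) > 0"
      using pos2 DS Mpos[of y] Mrec[of y] by auto
    moreover have "pr q (\<lambda>\<omega>. vDelta \<omega> \<and> vD \<omega> \<and> vS \<omega> \<and> vYrec \<omega> = y) = Dl y"
      unfolding Dl_def using recY by (intro pr_cong) auto
    ultimately show ?thesis unfolding cpr_def Mrec using Mpos[of y]
      by (auto simp: zero_less_divide_iff)
  qed
  have Ppos: "P y > 0" for y
  proof -
    have "M y \<le> P y" unfolding M_def P_def by (rule pr_mono) auto
    then show ?thesis using Mpos[of y] by simp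
  qed
  have mu: "muP q y = p True y / (p True y + p False y)" for y
  proof -
    have num: "pr q (\<lambda>\<omega>. vArec \<omega> \<and> vD \<omega> \<and> vS \<omega> \<and> vDelta \<omega> \<and> vYrec \<omega> = y) = N True y"
      unfolding N_def using recY recA by (intro pr_cong) auto
    have den: "pr q (\<lambda>\<omega>. vD \<omega> \<and> vS \<omega> \<and> vDelta \<omega> \<and> vYrec \<omega> = y) = Dl y"
      unfolding Dl_def using recY by (intro pr_cong) auto
    have "muP q y = N True y / Dl y" unfolding muP_def cpr_def num den by simp
    also have "N True y = Dl y * T True y / M y" using ciD'[of True y] Mpos[of y]
      by (simp add: field_simps)
    also have "T True y = M y * p True y / P y" using ciS'[of True y] Ppos[of y]
      by (simp add: field_simps)
    finally show ?thesis using Dlpos[of y] Mpos[of y] Psplit[of y] by simp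
  qed
  have RR: "RRF q = (p True True / A1) / (p False True / A0)"
  proof -
    have "pr q (\<lambda>\<omega>. (vY \<omega> \<and> vD \<omega>) \<and> vA \<omega>) = p True True"
      unfolding p_def by (rule pr_cong) auto
    moreover have "pr q (\<lambda>\<omega>. (vY \<omega> \<and> vD \<omega>) \<and> \<not> vA \<omega>) = p False True"
      unfolding p_def by (rule pr_cong) auto
    ultimately show ?thesis unfolding RRF_def cpr_def A1_def A0_def by simp
  qed
  have ex: "p True False / A1 = p False False / A0"
  proof -
    have "pr q (\<lambda>\<omega>. (\<not> vY \<omega> \<and> vD \<omega>) \<and> vA \<omega>) = p True False"
      unfolding p_def by (rule pr_cong) auto
    moreover have "pr q (\<lambda>\<omega>. (\<not> vY \<omega> \<and> vD \<omega>) \<and> \<not> vA \<omega>) = p False False"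
      unfolding p_def by (rule pr_cong) auto
    ultimately show ?thesis using exch unfolding cpr_def A1_def A0_def by simp
  qed
  have le: "p True y \<le> A1" "p False y \<le> A0" for y
    unfolding p_def A1_def A0_def by (rule pr_mono; simp)+
  show ?thesis unfolding ORP_def mu RR
  proof (rule alg)
    show "p True True \<ge> 0" "p False True \<ge> 0" "p True False \<ge> 0" "p False False \<ge> 0"
      unfolding p_def by (rule pr_nonneg)+
    show "p True True \<le> A1" "p True False \<le> A1" "p False True \<le> A0" "p False False \<le> A0"
      by (rule le)+
    show "p True False + p False False > 0" "p True True + p False True > 0"
      using Psplit Ppos by metis+
    show "p True False / A1 = p False False / A0" by (rule ex)
  qed
qed

theorem theorem1:
  fixes PX :: "(real ^ 'r) measure" and K :: "real ^ 'r \<Rightarrow> indiv pmf"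
  assumes PX: "prob_space PX" "sets PX = sets borel"
  assumes pos1: "AE x in PX. pr (K x) (\<lambda>\<omega>. vD \<omega> \<and> vS \<omega>) > 0 \<longrightarrow>
      cpr (K x) (\<lambda>\<omega>. vYrec \<omega> \<and> vD \<omega>) vS > 0 \<and>
      cpr (K x) (\<lambda>\<omega>. \<not> vYrec \<omega> \<and> vD \<omega>) vS > 0"
  assumes pos2: "AE x in PX. pr (K x) (\<lambda>\<omega>. vD \<omega> \<and> vS \<omega>) > 0 \<longrightarrow>
      (\<forall>y. pr (K x) (\<lambda>\<omega>. vD \<omega> \<and> vS \<omega> \<and> vYrec \<omega> = y) > 0 \<longrightarrow>
         cpr (K x) vDelta (\<lambda>\<omega>. vD \<omega> \<and> vS \<omega> \<and> vYrec \<omega> = y) > 0)"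
  assumes pos3: "AE x in PX. \<forall>y. pr (K x) (\<lambda>\<omega>. vD \<omega> \<and> vY \<omega> = y) > 0 \<longrightarrow>
         cpr (K x) vS (\<lambda>\<omega>. vD \<omega> \<and> vY \<omega> = y) > 0"
  assumes ciS: "AE x in PX. \<forall>y a s.
      pr (K x) (\<lambda>\<omega>. vS \<omega> = s \<and> vA \<omega> = a \<and> vD \<omega> \<and> vY \<omega> = y) * pr (K x) (\<lambda>\<omega>. vD \<omega> \<and> vY \<omega> = y)
    = pr (K x) (\<lambda>\<omega>. vS \<omega> = s \<and> vD \<omega> \<and> vY \<omega> = y) * pr (K x) (\<lambda>\<omega>. vA \<omega> = a \<and> vD \<omega> \<and> vY \<omega> = y)"
  assumes ciDelta: "AE x in PX. \<forall>y a d.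
      pr (K x) (\<lambda>\<omega>. vDelta \<omega> = d \<and> vA \<omega> = a \<and> vD \<omega> \<and> vS \<omega> \<and> vY \<omega> = y)
        * pr (K x) (\<lambda>\<omega>. vD \<omega> \<and> vS \<omega> \<and> vY \<omega> = y)
    = pr (K x) (\<lambda>\<omega>. vDelta \<omega> = d \<and> vD \<omega> \<and> vS \<omega> \<and> vY \<omega> = y)
        * pr (K x) (\<lambda>\<omega>. vA \<omega> = a \<and> vD \<omega> \<and> vS \<omega> \<and> vY \<omega> = y)"
  assumes exch: "AE x in PX. cpr (K x) (\<lambda>\<omega>. \<not> vY \<omega> \<and> vD \<omega>) vA
                          = cpr (K x) (\<lambda>\<omega>. \<not> vY \<omega> \<and> vD \<omega>) (\<lambda>\<omega>. \<not> vA \<omega>)"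
  assumes recA: "AE x in PX. \<forall>\<omega>\<in>set_pmf (K x). vD \<omega> \<and> vS \<omega> \<and> vDelta \<omega> \<longrightarrow> vArec \<omega> = vA \<omega>"
  assumes recY: "AE x in PX. \<forall>\<omega>\<in>set_pmf (K x). vD \<omega> \<and> vS \<omega> \<longrightarrow> vYrec \<omega> = vY \<omega>"
  shows "AE x in PX. pr (K x) (\<lambda>\<omega>. vD \<omega> \<and> vS \<omega>) > 0 \<longrightarrow> ORP (K x) = RRF (K x)"
    using pos1 pos2 ciS ciDelta exch recA recY
proof eventually_elim
  case (elim x)
  show ?case
  proof
    assume h: "pr (K x) (\<lambda>\<omega>. vD \<omega> \<and> vS \<omega>) > 0"
    show "ORP (K x) = RRF (K x)"
      by (rule main[OF h elim(1) elim(2) elim(3) elim(4) elim(5) elim(6) elim(7)])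
  qed
qed

end
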